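(* Let $A\in\mathbb R^{n\times n}$ be Hurwitz, $L\in\mathbb R^{n\times m}$, and $G_{yv}(s):=(sI-A)^{-1}L$. Let $P,\overline P,P^\dagger,\overline P^\dagger$ be matrices with $PP^\dagger=I$, $\overline P\,\overline P^\dagger=I$ satisfying: (C1) $P^\dagger P+\overline P^\dagger\overline P=I_n$; (C2) $PAP^\dagger$ and $\overline PA\overline P^\dagger$ are Hurwitz; (C3) $PL=0$ and $\overline PL$ is nonsingular. Define $$X(s):=P-(sI-PAP^\dagger)^{-1}PA\overline P^\dagger\overline P.$$ Then a transfer matrix $Q\in\mathcal{RH}_\infty$ (with $n$ columns) satisfies $Q\,G_{yv}=0$ if and only if there exists $\hat Q\in\mathcal{RH}_\infty$ such that $Q=\hat QX$.
   Context: $\mathcal{RH}_\infty$ denotes the set of stable, proper, real rational transfer matrices. A square real matrix is Hurwitz if all its eigenvalues have negative real part. *)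

theory Defs
  imports "HOL-Analysis.Analysis" "HOL-Computational_Algebra.Fraction_Field"
          "HOL-Computational_Algebra.Polynomial"
begin

text \<open>Real rational functions in s: the fraction field of real polynomials.
  Transfer matrices are matrices with entries in this field.\<close>
type_synonym rfun = "real poly fract"

definition const_rf :: "real \<Rightarrow> rfun" where
  "const_rf c = Fract [:c:] 1"

definition svar :: rfun where
  "svar = Fract [:0, 1:] 1"

definition rmat :: "real^'c^'r \<Rightarrow> rfun^'c^'r" where
  "rmat A = (\<chi> i j. const_rf (A $ i $ j))"

definition sI :: "rfun^'n^'n" where
  "sI = (\<chi> i j. if i = j then svar else 0)"

definition RH_inf_fun :: "rfun \<Rightarrow> bool" where
  "RH_inf_fun f \<longleftrightarrow> (\<exists>num den. f = Fract num den \<and> degree num \<le> degree den \<and>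
      (\<forall>z::complex. Re z \<ge> 0 \<longrightarrow> poly (map_poly complex_of_real den) z \<noteq> 0))"

definition RH_inf :: "rfun^'c^'r \<Rightarrow> bool" where
  "RH_inf Q \<longleftrightarrow> (\<forall>i j. RH_inf_fun (Q $ i $ j))"

definition hurwitz :: "real^'n^'n \<Rightarrow> bool" where
  "hurwitz A \<longleftrightarrow> (\<forall>(e::complex) (v::complex^'n). v \<noteq> 0 \<and>
      (\<chi> i j. complex_of_real (A $ i $ j)) *v v = e *s v \<longrightarrow> Re e < 0)"

end

theory Submission imports Defs begin

lemma matrix_add_rdistrib: "((B + C) ** A) = (B ** A) + (C ** A)"
  by (vector matrix_matrix_mult_def sum.distrib[symmetric] field_simps)
lemma matrix_sub_ldistrib: "(A ** (B - C)) = (A ** B) - (A ** (C::'a::ring_1^_^_))"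
  by (vector matrix_matrix_mult_def sum_subtractf[symmetric] field_simps)
lemma matrix_sub_rdistrib: "((B - C) ** A) = (B ** A) - (C ** (A::'a::ring_1^_^_))"
  by (vector matrix_matrix_mult_def sum_subtractf[symmetric] field_simps)

lemma mat_mult_left: "(mat c ** M) $ i $ j = c * M $ i $ j"
  unfolding matrix_matrix_mult_def mat_def
  by (auto simp: if_distrib if_distribR sum.delta cong: if_cong)
lemma mat_mult_right: "(M ** mat c) $ i $ j = M $ i $ j * c"
  unfolding matrix_matrix_mult_def mat_def
  by (auto simp: if_distrib if_distribR sum.delta' cong: if_cong)
lemma mat_comm: "mat (c::'a::comm_semiring_1) ** M = M ** mat c"
  by (simp add: vec_eq_iff mat_mult_left mat_mult_right mult.commute)

lemma sI_mat: "sI = mat svar" by (simp add: sI_def mat_def)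

lemma const_rf_add: "const_rf (a+b) = const_rf a + const_rf b"
  by (simp add: const_rf_def mult.commute)
lemma const_rf_mult: "const_rf (a*b) = const_rf a * const_rf b"
  by (simp add: const_rf_def mult.commute)
lemma const_rf_0: "const_rf 0 = 0" by (simp add: const_rf_def Zero_fract_def)
lemma const_rf_1: "const_rf 1 = 1" by (simp add: const_rf_def One_fract_def pCons_one)
lemma const_rf_minus: "const_rf (- a) = - const_rf a" by (simp add: const_rf_def mult.commute)
lemma const_rf_diff: "const_rf (a - b) = const_rf a - const_rf b" by (simp add: const_rf_def mult.commute)
lemma const_rf_sum: "const_rf (sum f S) = (\<Sum>x\<in>S. const_rf (f x))"
  using sum_comp_morphism[of const_rf f S] by (simp add: const_rf_0 const_rf_add o_def)

lemma rmat_mult: "rmat (X ** Y) = rmat X ** rmat Y"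
  by (simp add: rmat_def matrix_matrix_mult_def vec_eq_iff const_rf_sum const_rf_mult)
lemma rmat_add: "rmat (X + Y) = rmat X + rmat Y"
  by (simp add: rmat_def vec_eq_iff const_rf_add)
lemma rmat_diff: "rmat (X - Y) = rmat X - rmat Y"
  by (simp add: rmat_def vec_eq_iff const_rf_diff)
lemma rmat_0: "rmat 0 = 0"
  by (simp add: rmat_def vec_eq_iff const_rf_0)
lemma rmat_1: "rmat (mat 1) = mat 1"
  by (simp add: rmat_def mat_def vec_eq_iff const_rf_0 const_rf_1)


lemma det_hom:
  fixes f :: "'a::comm_ring_1 \<Rightarrow> 'b::comm_ring_1"
  assumes add: "\<And>x y. f (x+y) = f x + f y" and mul: "\<And>x y. f (x*y) = f x * f y" and one: "f 1 = 1"
  shows "det (\<chi> i j. f (M$i$j) :: 'b^'n^'n) = f (det (M::'a^'n^'n))"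
proof -
  have z: "f 0 = 0" using add[of 0 0] by simp
  have neg: "f (- x) = - f x" for x using add[of x "-x"] z minus_unique[of "f x" "f (-x)"] by simp
  have pr: "f (prod g S) = prod (\<lambda>x. f (g x)) S" for g and S :: "'n set"
    by (induct S rule: infinite_finite_induct) (simp_all add: one mul)
  have sm: "f (sum g S) = sum (\<lambda>x. f (g x)) S" for g and S :: "('n \<Rightarrow> 'n) set"
    by (induct S rule: infinite_finite_induct) (simp_all add: z add)
  have sg: "f (of_int (sign p)) = of_int (sign p)" for p :: "'n \<Rightarrow> 'n"
    by (simp add: sign_def one neg)
  have "f (det M) = (\<Sum>p\<in>{p. p permutes (UNIV::'n set)}. f (of_int (sign p) * prod (\<lambda>i. M$i$p i) UNIV))"
    unfolding det_def by (rule sm)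
  also have "\<dots> = det (\<chi> i j. f (M$i$j) :: 'b^'n^'n)"
    unfolding det_def by (simp add: mul sg pr)
  finally show ?thesis by simp
qed

definition fr :: "real poly \<Rightarrow> rfun" where "fr p = Fract p 1"

lemma fr_add: "fr (a+b) = fr a + fr b" by (simp add: fr_def)
lemma fr_mult: "fr (a*b) = fr a * fr b" by (simp add: fr_def)
lemma fr_1: "fr 1 = 1" by (simp add: fr_def One_fract_def)
lemma fr_eq0: "fr p = 0 \<longleftrightarrow> p = 0" by (simp add: fr_def Zero_fract_def eq_fract)

definition pm :: "real^'n^'n \<Rightarrow> real poly^'n^'n" where
  "pm B = (\<chi> i j. [:- B$i$j, if i = j then 1 else 0:])"

lemma sI_minus_rmat: "sI - rmat B = (\<chi> i j. fr (pm B $ i $ j))"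
  by (simp add: vec_eq_iff sI_def rmat_def pm_def fr_def svar_def const_rf_def Zero_fract_def)

lemma det_sI_minus: "det (sI - rmat B) = fr (det (pm B))"
  unfolding sI_minus_rmat by (rule det_hom[OF fr_add fr_mult fr_1])

lemma degree_det_le:
  fixes M :: "real poly^'n^'n"
  assumes "\<And>i j. degree (M$i$j) \<le> d j"
  shows "degree (det M) \<le> sum d UNIV"
  unfolding det_def
proof (rule degree_sum_le)
  fix p assume p: "p \<in> {p. p permutes (UNIV::'n set)}"
  have "degree (of_int (sign p) * prod (\<lambda>i. M$i$p i) UNIV) \<le> degree (of_int (sign p) :: real poly) + degree (prod (\<lambda>i. M$i$p i) UNIV)"
    by (rule degree_mult_le)
  also have "\<dots> = degree (prod (\<lambda>i. M$i$p i) UNIV)" by simp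
  also have "\<dots> \<le> sum (degree \<circ> (\<lambda>i. M$i$p i)) UNIV" by (rule degree_prod_sum_le) simp
  also have "\<dots> \<le> sum (d \<circ> p) UNIV" by (rule sum_mono) (simp add: assms)
  also have "\<dots> = sum d UNIV" using sum.permute[of p UNIV d] p by simp
  finally show "degree (of_int (sign p) * prod (\<lambda>i. M$i$p i) UNIV) \<le> sum d UNIV" .
qed simp

lemma degree_pm: "degree (pm B $ i $ j) \<le> 1"
  by (simp add: pm_def)

lemma coeff_det_pm: "coeff (det (pm B)) CARD('n) = 1" for B :: "real^'n^'n"
proof -
  have t: "coeff (of_int (sign p) * prod (\<lambda>i. pm B$i$p i) UNIV) CARD('n) = (if p = id then 1 else 0)"
    if p: "p permutes (UNIV::'n set)" for p
  proof (cases "p = id")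
    case True
    have nz: "\<forall>i\<in>UNIV. pm B $ i $ i \<noteq> 0" by (simp add: pm_def)
    have dg: "degree (prod (\<lambda>i. pm B$i$i) UNIV) = CARD('n)"
      using degree_prod_eq_sum_degree[OF nz] by (simp add: pm_def)
    have "lead_coeff (prod (\<lambda>i. pm B$i$i) UNIV) = 1"
      by (simp add: lead_coeff_prod pm_def)
    then show ?thesis using True dg by (simp add: sign_id)
  next
    case False
    then obtain i0 where i0: "p i0 \<noteq> i0" by (metis eq_id_iff)
    have "degree (of_int (sign p) * prod (\<lambda>i. pm B$i$p i) UNIV) \<le> degree (of_int (sign p) :: real poly) + degree (prod (\<lambda>i. pm B$i$p i) UNIV)"
      by (rule degree_mult_le)
    also have "\<dots> = degree (prod (\<lambda>i. pm B$i$p i) UNIV)" by simp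
    also have "\<dots> \<le> sum (degree \<circ> (\<lambda>i. pm B$i$p i)) UNIV" by (rule degree_prod_sum_le) simp
    also have "\<dots> = sum (\<lambda>i. if p i = i then 1 else 0) UNIV"
      by (rule sum.cong) (auto simp: pm_def)
    also have "\<dots> = card {i. p i = i}" by (simp add: sum.If_cases)
    also have "\<dots> < CARD('n)" using i0 by (intro psubset_card_mono) auto
    finally show ?thesis using False by (simp add: coeff_eq_0)
  qed
  have "coeff (det (pm B)) CARD('n) = (\<Sum>p\<in>{p. p permutes (UNIV::'n set)}. if p = id then 1 else 0)"
    unfolding det_def coeff_sum by (rule sum.cong) (auto simp: t)
  also have "\<dots> = 1" by (simp add: permutes_id)
  finally show ?thesis .
qed

lemma degree_det_pm: "degree (det (pm B)) = CARD('n)" for B :: "real^'n^'n"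
proof -
  have "degree (det (pm B)) \<le> sum (\<lambda>_. 1) (UNIV::'n set)"
    by (rule degree_det_le) (rule degree_pm)
  moreover have "CARD('n) \<le> degree (det (pm B))"
    by (rule le_degree) (simp add: coeff_det_pm)
  ultimately show ?thesis by simp
qed

lemma det_pm_nz: "det (pm B) \<noteq> 0"
  using coeff_det_pm[of B] by auto

lemma invertible_sI_minus: "invertible (sI - rmat B)"
  by (simp add: invertible_det_nz det_sI_minus fr_eq0 det_pm_nz)

lemma matrix_inv_both: assumes "invertible M"
  shows "M ** matrix_inv M = mat 1" "matrix_inv M ** M = mat 1"
  using someI_ex[OF assms[unfolded invertible_def]] by (simp_all add: matrix_inv_def)


definition ev :: "complex \<Rightarrow> real poly \<Rightarrow> complex" where
  "ev z p = poly (map_poly complex_of_real p) z"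

lemma map_of_real_add: "map_poly complex_of_real (p + q) = map_poly of_real p + map_poly of_real q"
  by (simp add: poly_eq_iff coeff_map_poly)
lemma map_of_real_mult: "map_poly complex_of_real (p * q) = map_poly of_real p * map_poly of_real q"
  by (simp add: poly_eq_iff coeff_map_poly coeff_mult of_real_sum)

lemma ev_add: "ev z (p+q) = ev z p + ev z q" by (simp add: ev_def map_of_real_add)
lemma ev_mult: "ev z (p*q) = ev z p * ev z q" by (simp add: ev_def map_of_real_mult)
lemma ev_1: "ev z 1 = 1" by (simp add: ev_def)

lemma mat_mult_vec: "mat c *v v = c *s v"
  by (simp add: vec_eq_iff matrix_vector_mult_def mat_def if_distrib if_distribR sum.delta cong: if_cong)

lemma det_zero_ker:
  fixes M :: "'a::field^'n^'n"
  assumes "det M = 0" shows "\<exists>v. v \<noteq> 0 \<and> M *v v = 0"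
proof -
  have "\<not> inj ((*v) M)"
    using det_nz_iff_inj_gen[OF matrix_vector_mul_linear_gen, of M] assms
    by (simp add: matrix_of_matrix_vector_mul)
  then obtain x y where "x \<noteq> y" "M *v x = M *v y" unfolding inj_def by blast
  then show ?thesis by (intro exI[of _ "x - y"]) (simp add: matrix_vector_mult_diff_distrib)
qed

lemma stable_det_pm:
  assumes h: "hurwitz B" and z: "Re z \<ge> 0"
  shows "poly (map_poly complex_of_real (det (pm B))) z \<noteq> 0"
proof
  let ?Bc = "(\<chi> i j. complex_of_real (B $ i $ j))"
  assume "poly (map_poly complex_of_real (det (pm B))) z = 0"
  then have "ev z (det (pm B)) = 0" by (simp add: ev_def)
  also have "ev z (det (pm B)) = det (\<chi> i j. ev z (pm B $ i $ j))"
    by (rule det_hom[OF ev_add ev_mult ev_1, symmetric])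
  also have "(\<chi> i j. ev z (pm B $ i $ j)) = mat z - ?Bc"
    by (simp add: vec_eq_iff pm_def ev_def mat_def map_poly_pCons)
  finally obtain v where v: "v \<noteq> 0" "(mat z - ?Bc) *v v = 0" using det_zero_ker by blast
  then have "?Bc *v v = z *s v" by (simp add: matrix_vector_mult_diff_rdistrib mat_mult_vec)
  then have "Re z < 0" using h v(1) unfolding hurwitz_def by blast
  with z show False by simp
qed

lemma inv_entry:
  fixes B :: "real^'n^'n"
  shows "matrix_inv (sI - rmat B) $ k $ j =
    Fract (det (\<chi> i l. if l = k then (if i = j then 1 else 0) else pm B $ i $ l)) (det (pm B))"
proof -
  let ?N = "sI - rmat B :: rfun^'n^'n"
  let ?x = "(\<chi> i. matrix_inv ?N $ i $ j)"
  let ?b = "(\<chi> i. (mat 1 :: rfun^'n^'n) $ i $ j)"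
  have inv: "?N ** matrix_inv ?N = mat 1" using matrix_inv_both[OF invertible_sI_minus] by blast
  have "?N *v ?x = ?b"
    using inv by (simp add: vec_eq_iff matrix_vector_mult_def matrix_matrix_mult_def)
  moreover have d0: "det ?N \<noteq> 0" by (simp add: det_sI_minus fr_eq0 det_pm_nz)
  ultimately have x: "?x = (\<chi> k. det(\<chi> i l. if l=k then ?b$i else ?N$i$l) / det ?N)"
    using cramer[OF d0] by blast
  have "(\<chi> i l. if l=k then ?b$i else ?N$i$l) =
     (\<chi> i l. fr ((\<chi> i l. if l = k then (if i = j then 1 else 0) else pm B $ i $ l) $ i $ l))"
    by (simp add: vec_eq_iff sI_minus_rmat mat_def fr_def Zero_fract_def One_fract_def)
  then have "det (\<chi> i l. if l=k then ?b$i else ?N$i$l) =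
     fr (det (\<chi> i l. if l = k then (if i = j then 1 else 0) else pm B $ i $ l))"
    by (simp only:) (rule det_hom[OF fr_add fr_mult fr_1])
  then have "?x $ k = fr (det (\<chi> i l. if l = k then (if i = j then 1 else 0) else pm B $ i $ l)) / fr (det (pm B))"
    by (subst x) (simp add: det_sI_minus)
  then show ?thesis by (simp add: fr_def det_pm_nz)
qed

definition stable :: "real poly \<Rightarrow> bool" where
  "stable d \<longleftrightarrow> (\<forall>z::complex. Re z \<ge> 0 \<longrightarrow> poly (map_poly complex_of_real d) z \<noteq> 0)"

lemma RH_fun_iff: "RH_inf_fun f \<longleftrightarrow> (\<exists>num den. f = Fract num den \<and> degree num \<le> degree den \<and> stable den)"
  by (simp add: RH_inf_fun_def stable_def)

lemma stable_nz: "stable d \<Longrightarrow> d \<noteq> 0"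
  unfolding stable_def by (metis map_poly_0 order_refl poly_0 zero_complex.simps(1))

lemma stable_mult: "stable a \<Longrightarrow> stable b \<Longrightarrow> stable (a*b)"
  unfolding stable_def by (simp add: map_of_real_mult)

lemma stable_1: "stable 1" by (simp add: stable_def)

lemma RH_const: "RH_inf_fun (const_rf c)"
  unfolding RH_fun_iff const_rf_def by (intro exI[of _ "[:c:]"] exI[of _ 1]) (simp add: stable_1)

lemma RH_0: "RH_inf_fun 0"
  using RH_const[of 0] by (simp add: const_rf_0)

lemma RH_add: assumes "RH_inf_fun f" "RH_inf_fun g" shows "RH_inf_fun (f + g)"
proof -
  obtain n1 d1 where 1: "f = Fract n1 d1" "degree n1 \<le> degree d1" "stable d1" using assms(1) RH_fun_iff by blast
  obtain n2 d2 where 2: "g = Fract n2 d2" "degree n2 \<le> degree d2" "stable d2" using assms(2) RH_fun_iff by blast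
  have nz: "d1 \<noteq> 0" "d2 \<noteq> 0" using 1 2 stable_nz by auto
  have "f + g = Fract (n1 * d2 + n2 * d1) (d1 * d2)" using 1 2 nz by (simp add: mult.commute)
  moreover have "degree (n1 * d2 + n2 * d1) \<le> degree (d1 * d2)"
  proof (rule degree_add_le)
    have "degree (n1 * d2) \<le> degree n1 + degree d2" by (rule degree_mult_le)
    then show "degree (n1 * d2) \<le> degree (d1 * d2)" using 1 nz by (simp add: degree_mult_eq)
    have "degree (n2 * d1) \<le> degree n2 + degree d1" by (rule degree_mult_le)
    then show "degree (n2 * d1) \<le> degree (d1 * d2)" using 2 nz by (simp add: degree_mult_eq)
  qed
  ultimately show ?thesis unfolding RH_fun_iff using 1 2 stable_mult by blast
qed

lemma RH_mult: assumes "RH_inf_fun f" "RH_inf_fun g" shows "RH_inf_fun (f * g)"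
proof -
  obtain n1 d1 where 1: "f = Fract n1 d1" "degree n1 \<le> degree d1" "stable d1" using assms(1) RH_fun_iff by blast
  obtain n2 d2 where 2: "g = Fract n2 d2" "degree n2 \<le> degree d2" "stable d2" using assms(2) RH_fun_iff by blast
  have nz: "d1 \<noteq> 0" "d2 \<noteq> 0" using 1 2 stable_nz by auto
  have "f * g = Fract (n1 * n2) (d1 * d2)" using 1 2 by simp
  moreover have "degree (n1 * n2) \<le> degree (d1 * d2)"
    using degree_mult_le[of n1 n2] 1 2 nz by (simp add: degree_mult_eq)
  ultimately show ?thesis unfolding RH_fun_iff using 1 2 stable_mult by blast
qed

lemma RH_minus: assumes "RH_inf_fun f" shows "RH_inf_fun (- f)"
  using RH_mult[OF RH_const[of "-1"] assms] by (simp add: const_rf_minus const_rf_1)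

lemma RH_diff: "RH_inf_fun f \<Longrightarrow> RH_inf_fun g \<Longrightarrow> RH_inf_fun (f - g)"
  using RH_add[of f "-g"] RH_minus[of g] by simp

lemma RH_sum: "(\<And>x. x \<in> S \<Longrightarrow> RH_inf_fun (f x)) \<Longrightarrow> RH_inf_fun (sum f S)"
  by (induct S rule: infinite_finite_induct) (auto intro: RH_0 RH_add)

lemma RHm_mult: "RH_inf A \<Longrightarrow> RH_inf B \<Longrightarrow> RH_inf (A ** B)"
  unfolding RH_inf_def matrix_matrix_mult_def by (auto intro!: RH_sum RH_mult)
lemma RHm_add: "RH_inf A \<Longrightarrow> RH_inf B \<Longrightarrow> RH_inf (A + B)"
  unfolding RH_inf_def by (auto intro!: RH_add)
lemma RHm_diff: "RH_inf A \<Longrightarrow> RH_inf B \<Longrightarrow> RH_inf (A - B)"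
  unfolding RH_inf_def by (auto intro!: RH_diff)
lemma RHm_rmat: "RH_inf (rmat B)"
  unfolding RH_inf_def rmat_def by (auto intro!: RH_const)

lemma RHm_inv:
  fixes B :: "real^'n^'n"
  assumes h: "hurwitz B"
  shows "RH_inf (matrix_inv (sI - rmat B))"
  unfolding RH_inf_def RH_fun_iff
proof (intro allI)
  fix k j :: 'n
  let ?C = "(\<chi> i l. if l = k then (if i = j then 1 else 0) else pm B $ i $ l) :: real poly^'n^'n"
  have "degree (det ?C) \<le> sum (\<lambda>l. if l = k then 0 else 1) (UNIV::'n set)"
    by (rule degree_det_le) (auto simp: pm_def)
  also have "\<dots> \<le> sum (\<lambda>l. 1) (UNIV::'n set)" by (rule sum_mono) auto
  also have "\<dots> = degree (det (pm B))" by (simp add: degree_det_pm)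
  finally have "degree (det ?C) \<le> degree (det (pm B))" .
  moreover have "stable (det (pm B))" using stable_det_pm[OF h] by (simp add: stable_def)
  ultimately show "\<exists>num den. matrix_inv (sI - rmat B) $ k $ j = Fract num den \<and> degree num \<le> degree den \<and> stable den"
    by (auto simp: inv_entry)
qed


theorem lemma3:
  fixes A :: "real^'n^'n" and L :: "real^'m^'n"
    and P :: "real^'n^'k" and Pd :: "real^'k^'n"
    and Pb :: "real^'n^'m" and Pbd :: "real^'m^'n"
    and Q :: "rfun^'n^'p"
  assumes hurA: "hurwitz A"
    and PPd: "P ** Pd = mat 1" and PbPbd: "Pb ** Pbd = mat 1"
    and C1: "Pd ** P + Pbd ** Pb = mat 1"
    and C2: "hurwitz (P ** A ** Pd)" "hurwitz (Pb ** A ** Pbd)"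
    and C3: "P ** L = 0" "invertible (Pb ** L)"
    and RHQ: "RH_inf Q"
  shows "Q ** (matrix_inv (sI - rmat A) ** rmat L) = 0 \<longleftrightarrow>
         (\<exists>Qh :: rfun^'k^'p. RH_inf Qh \<and>
            Q = Qh ** (rmat P - matrix_inv (sI - rmat (P ** A ** Pd)) ** rmat (P ** A ** Pbd ** Pb)))"
proof -
  define N where "N = (sI - rmat A :: rfun^'n^'n)"
  define Ni where "Ni = matrix_inv N"
  define K where "K = (sI - rmat (P ** A ** Pd) :: rfun^'k^'k)"
  define Ki where "Ki = matrix_inv K"
  define X where "X = rmat P - Ki ** rmat (P ** A ** Pbd ** Pb)"
  have N1: "N ** Ni = mat 1" "Ni ** N = mat 1"
    using matrix_inv_both[OF invertible_sI_minus] by (simp_all add: N_def Ni_def)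
  have K1: "K ** Ki = mat 1" "Ki ** K = mat 1"
    using matrix_inv_both[OF invertible_sI_minus] by (simp_all add: K_def Ki_def)
  have sIc: "(sI :: rfun^'k^'k) ** rmat P = rmat P ** (sI :: rfun^'n^'n)"
    by (simp add: sI_mat vec_eq_iff mat_mult_left mat_mult_right mult.commute)
  have sIc2: "rmat Pd ** (sI :: rfun^'k^'k) = (sI :: rfun^'n^'n) ** rmat Pd"
    by (simp add: sI_mat vec_eq_iff mat_mult_left mat_mult_right mult.commute)
  have PA: "P ** A ** Pd ** P + P ** A ** Pbd ** Pb = P ** A"
  proof -
    have "P ** A ** Pd ** P + P ** A ** Pbd ** Pb = (P ** A) ** (Pd ** P + Pbd ** Pb)"
      by (simp add: matrix_add_ldistrib matrix_mul_assoc)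
    then show ?thesis by (simp add: C1)
  qed
  have KX: "K ** X = rmat P ** N"
  proof -
    have "K ** X = K ** rmat P - (K ** Ki) ** rmat (P ** A ** Pbd ** Pb)"
      by (simp add: X_def matrix_sub_ldistrib matrix_mul_assoc)
    also have "\<dots> = K ** rmat P - rmat (P ** A ** Pbd ** Pb)"
      by (simp only: K1 matrix_mul_lid)
    also have "K ** rmat P = sI ** rmat P - rmat (P ** A ** Pd ** P)"
      unfolding K_def matrix_sub_rdistrib rmat_mult[of "P ** A ** Pd" P] ..
    also have "sI ** rmat P - rmat (P ** A ** Pd ** P) - rmat (P ** A ** Pbd ** Pb) =
       rmat P ** sI - (rmat (P ** A ** Pd ** P) + rmat (P ** A ** Pbd ** Pb))"
      by (simp add: sIc)
    also have "\<dots> = rmat P ** sI - rmat (P ** A)"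
      by (simp only: rmat_add[symmetric] PA)
    also have "\<dots> = rmat P ** N"
      by (simp add: N_def matrix_sub_ldistrib rmat_mult)
    finally show ?thesis .
  qed
  have I1: "X = Ki ** rmat P ** N"
  proof -
    have "X = (Ki ** K) ** X" by (simp add: K1)
    also have "\<dots> = Ki ** rmat P ** N" by (simp flip: matrix_mul_assoc add: KX)
    finally show ?thesis .
  qed
  have goal: "Q ** (Ni ** rmat L) = 0 \<longleftrightarrow> (\<exists>Qh :: rfun^'k^'p. RH_inf Qh \<and> Q = Qh ** X)"
  proof
    assume H: "Q ** (Ni ** rmat L) = 0"
    define R where "R = Q ** Ni"
    have RL: "R ** rmat L = 0" using H by (simp add: R_def matrix_mul_assoc)
    have Lsplit: "rmat L = rmat Pd ** rmat (P ** L) + rmat Pbd ** rmat (Pb ** L)"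
    proof -
      have "L = (Pd ** P + Pbd ** Pb) ** L" by (simp add: C1)
      then show ?thesis by (metis matrix_add_rdistrib matrix_mul_assoc rmat_add rmat_mult)
    qed
    have "R ** rmat Pbd ** rmat (Pb ** L) = 0"
      using RL by (simp add: Lsplit C3 rmat_0 matrix_add_ldistrib matrix_mul_assoc)
    then have "R ** rmat Pbd ** rmat ((Pb ** L) ** matrix_inv (Pb ** L)) = 0"
      by (simp add: rmat_mult matrix_mul_assoc)
    then have RPbd: "R ** rmat Pbd = 0"
      using matrix_inv_both(1)[OF C3(2)] by (simp add: rmat_1)
    have RPdP: "R ** rmat (Pd ** P) = R"
    proof -
      have "rmat (Pd ** P) = mat 1 - rmat Pbd ** rmat Pb"
        using C1 by (metis add_diff_cancel_right' rmat_1 rmat_diff rmat_mult)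
      then show ?thesis by (simp add: matrix_sub_ldistrib matrix_mul_assoc RPbd)
    qed
    have RN: "R ** N = Q" by (simp add: R_def flip: matrix_mul_assoc add: N1)
    define Qh where "Qh = R ** rmat Pd ** K"
    have "Qh ** X = R ** rmat Pd ** (K ** Ki) ** rmat P ** N"
      by (simp add: Qh_def I1 matrix_mul_assoc)
    also have "\<dots> = R ** rmat (Pd ** P) ** N" by (simp add: K1 rmat_mult matrix_mul_assoc)
    also have "\<dots> = Q" by (simp add: RPdP RN)
    finally have QX: "Q = Qh ** X" by simp
    have RHR: "RH_inf R" unfolding R_def Ni_def N_def by (intro RHm_mult RHQ RHm_inv hurA)
    have c2: "R ** rmat Pd ** (sI :: rfun^'k^'k) = R ** (sI :: rfun^'n^'n) ** rmat Pd"
      by (metis matrix_mul_assoc sIc2)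
    have "Qh = R ** (sI ** rmat Pd) - R ** rmat (Pd ** (P ** A ** Pd))"
      by (simp add: Qh_def K_def matrix_sub_ldistrib c2 rmat_mult matrix_mul_assoc)
    also have "\<dots> = (R ** N + R ** rmat A) ** rmat Pd - R ** rmat (Pd ** (P ** A ** Pd))"
      by (simp add: N_def matrix_add_rdistrib matrix_sub_ldistrib matrix_mul_assoc)
    also have "\<dots> = (Q + R ** rmat A) ** rmat Pd - R ** rmat (Pd ** (P ** A ** Pd))"
      by (simp add: RN)
    finally have "RH_inf Qh"
      by (simp add: RHm_diff RHm_mult RHm_add RHm_rmat RHR RHQ)
    with QX show "\<exists>Qh :: rfun^'k^'p. RH_inf Qh \<and> Q = Qh ** X" by blast
  next
    assume "\<exists>Qh :: rfun^'k^'p. RH_inf Qh \<and> Q = Qh ** X"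
    then obtain Qh :: "rfun^'k^'p" where "Q = Qh ** X" by blast
    then have "Q ** (Ni ** rmat L) = Qh ** Ki ** rmat P ** (N ** Ni) ** rmat L"
      by (simp add: I1 matrix_mul_assoc)
    also have "\<dots> = Qh ** Ki ** rmat (P ** L)" by (simp add: N1 rmat_mult matrix_mul_assoc)
    also have "\<dots> = 0" by (simp add: C3 rmat_0)
    finally show "Q ** (Ni ** rmat L) = 0" .
  qed
  then show ?thesis by (simp add: N_def Ni_def K_def Ki_def X_def)
qed

end
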